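(* Let $\mathbb{K}\in\{\mathbb{R},\mathbb{C}\}$, let $\mathcal{X}$ be a separable topological $\mathbb{K}$-vector space whose topological dual $\mathcal{X}^{\ast}$ separates the points of $\mathcal{X}$, and let $\mathcal{U}$ be a $0$-neighborhood in $\mathcal{X}$. Then every net $(U_j)_{j\in J}\subseteq\mathbf{CU}_{\mathcal{U}}(\mathcal{X}^{\ast})$ that converges in the weak*-Hausdorff hypertopology converges to $U_\infty=\mathrm{Li}_{j\in J}U_j=\mathrm{Ls}_{j\in J}U_j\in\mathbf{CU}_{\mathcal{U}}(\mathcal{X}^{\ast})$.
   Context: Topological vector spaces are Hausdorff. $\mathcal{X}^{\ast}$ carries the weak* topology. $\mathcal{U}^{\circ}=\{\sigma\in\mathcal{X}^{\ast}:|\sigma(A)|\le1\ \forall A\in\mathcal{U}\}$; $\mathbf{CU}_{\mathcal{U}}(\mathcal{X}^{\ast})$ is the set of nonempty convex weak*-closed subsets of $\mathcal{U}^{\circ}$. The weak*-Hausdorff hypertopology is generated by the extended pseudometrics $d_H^{(A)}(F,\tilde F)=\max\{\sup_{\sigma\in F}\inf_{\tilde\sigma\in\tilde F}|(\sigma-\tilde\sigma)(A)|,\ \sup_{\tilde\sigma\in\tilde F}\inf_{\sigma\in F}|(\sigma-\tilde\sigma)(A)|\}$, $A\in\mathcal{X}$. For a net $(F_j)_{j\in J}$ of subsets of $\mathcal{X}^{\ast}$: $\mathrm{Li}_{j\in J}F_j$ is the set of weak* limits of nets $(\sigma_j)_{j\in J}$ with $\sigma_j\in F_j$ for all $j\succ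 j_0$ for some $j_0$; $\mathrm{Ls}_{j\in J}F_j$ is the set of weak* limits of nets $(\sigma_i)_{i\in I}$ with $\sigma_i\in F_{s(i)}$ for some subnet $(F_{s(i)})_{i\in I}$. *)

theory Defs
  imports "HOL-Analysis.Analysis"
begin

text \<open>The vector space X is a type 'a with its additive group,
  a scalar multiplication by complex numbers (only scalars in K matter) and a topology T.\<close>

definition scalar_field :: "complex set \<Rightarrow> bool" where
  "scalar_field K \<longleftrightarrow> K = \<real> \<or> K = UNIV"

definition tvs :: "complex set \<Rightarrow> (complex \<Rightarrow> 'a::ab_group_add \<Rightarrow> 'a) \<Rightarrow> 'a topology \<Rightarrow> bool" where
  "tvs K smul T \<longleftrightarrow>
     scalar_field K \<and>
     (\<forall>a\<in>K. \<forall>x y. smul a (x + y) = smul a x + smul a y) \<and>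
     (\<forall>a\<in>K. \<forall>b\<in>K. \<forall>x. smul (a + b) x = smul a x + smul b x) \<and>
     (\<forall>a\<in>K. \<forall>b\<in>K. \<forall>x. smul a (smul b x) = smul (a * b) x) \<and>
     (\<forall>x. smul 1 x = x) \<and>
     topspace T = UNIV \<and>
     Hausdorff_space T \<and>
     continuous_map (prod_topology T T) T (\<lambda>(x, y). x + y) \<and>
     continuous_map (prod_topology (subtopology euclidean K) T) T (\<lambda>(a, x). smul a x)"

definition tdual :: "complex set \<Rightarrow> (complex \<Rightarrow> 'a::ab_group_add \<Rightarrow> 'a) \<Rightarrow> 'a topology \<Rightarrow> ('a \<Rightarrow> complex) set" where
  "tdual K smul T = {\<sigma>. (\<forall>x y. \<sigma> (x + y) = \<sigma> x + \<sigma> y) \<and>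
                          (\<forall>a\<in>K. \<forall>x. \<sigma> (smul a x) = a * \<sigma> x) \<and>
                          (\<forall>x. \<sigma> x \<in> K) \<and>
                          continuous_map T euclidean \<sigma>}"

definition dual_separates_points :: "complex set \<Rightarrow> (complex \<Rightarrow> 'a::ab_group_add \<Rightarrow> 'a) \<Rightarrow> 'a topology \<Rightarrow> bool" where
  "dual_separates_points K smul T \<longleftrightarrow>
     (\<forall>x y. x \<noteq> y \<longrightarrow> (\<exists>\<sigma>\<in>tdual K smul T. \<sigma> x \<noteq> \<sigma> y))"

definition zero_nhd :: "'a::ab_group_add topology \<Rightarrow> 'a set \<Rightarrow> bool" where
  "zero_nhd T U \<longleftrightarrow> (\<exists>V. openin T V \<and> 0 \<in> V \<and> V \<subseteq> U)"

text \<open>Weak* topology on the dual: topology of pointwise convergence, i.e. the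
  subspace topology of the product topology on functions 'a => complex.\<close>
definition weakstar :: "complex set \<Rightarrow> (complex \<Rightarrow> 'a::ab_group_add \<Rightarrow> 'a) \<Rightarrow> 'a topology \<Rightarrow> ('a \<Rightarrow> complex) topology" where
  "weakstar K smul T = subtopology (product_topology (\<lambda>_. euclidean) UNIV) (tdual K smul T)"

definition polar :: "complex set \<Rightarrow> (complex \<Rightarrow> 'a::ab_group_add \<Rightarrow> 'a) \<Rightarrow> 'a topology \<Rightarrow> 'a set \<Rightarrow> ('a \<Rightarrow> complex) set" where
  "polar K smul T U = {\<sigma>\<in>tdual K smul T. \<forall>A\<in>U. cmod (\<sigma> A) \<le> 1}"

definition convex_fun_set :: "('a \<Rightarrow> complex) set \<Rightarrow> bool" where
  "convex_fun_set F \<longleftrightarrow> (\<forall>\<sigma>\<in>F. \<forall>\<tau>\<in>F. \<forall>t::real. 0 \<le> t \<and> t \<le> 1 \<longrightarrow>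
       (\<lambda>x. complex_of_real t * \<sigma> x + complex_of_real (1 - t) * \<tau> x) \<in> F)"

definition CU :: "complex set \<Rightarrow> (complex \<Rightarrow> 'a::ab_group_add \<Rightarrow> 'a) \<Rightarrow> 'a topology \<Rightarrow> 'a set \<Rightarrow> ('a \<Rightarrow> complex) set set" where
  "CU K smul T U = {F. F \<noteq> {} \<and> F \<subseteq> polar K smul T U \<and> convex_fun_set F \<and>
                        closedin (weakstar K smul T) F}"

definition dH :: "'a \<Rightarrow> ('a \<Rightarrow> complex) set \<Rightarrow> ('a \<Rightarrow> complex) set \<Rightarrow> ereal" where
  "dH A F G = max (SUP \<sigma>\<in>F. INF \<tau>\<in>G. ereal (cmod (\<sigma> A - \<tau> A)))
                  (SUP \<tau>\<in>G. INF \<sigma>\<in>F. ereal (cmod (\<sigma> A - \<tau> A)))"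

definition directed :: "'j set \<Rightarrow> ('j \<Rightarrow> 'j \<Rightarrow> bool) \<Rightarrow> bool" where
  "directed J le \<longleftrightarrow> J \<noteq> {} \<and> (\<forall>i\<in>J. le i i) \<and>
     (\<forall>i\<in>J. \<forall>j\<in>J. \<forall>k\<in>J. le i j \<and> le j k \<longrightarrow> le i k) \<and>
     (\<forall>i\<in>J. \<forall>j\<in>J. \<exists>k\<in>J. le i k \<and> le j k)"

definition net_limit :: "'b topology \<Rightarrow> 'j set \<Rightarrow> ('j \<Rightarrow> 'j \<Rightarrow> bool) \<Rightarrow> ('j \<Rightarrow> 'b) \<Rightarrow> 'b \<Rightarrow> bool" where
  "net_limit X J le f l \<longleftrightarrow> l \<in> topspace X \<and>
     (\<forall>W. openin X W \<and> l \<in> W \<longrightarrow> (\<exists>j0\<in>J. \<forall>j\<in>J. le j0 j \<longrightarrow> f j \<in> W))"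

text \<open>Convergence in the hypertopology generated by the pseudometrics dH A, A in X.\<close>
definition wsH_converges :: "'j set \<Rightarrow> ('j \<Rightarrow> 'j \<Rightarrow> bool) \<Rightarrow> ('j \<Rightarrow> ('a \<Rightarrow> complex) set) \<Rightarrow> ('a \<Rightarrow> complex) set \<Rightarrow> bool" where
  "wsH_converges J le F G \<longleftrightarrow>
     (\<forall>A. \<forall>\<epsilon>>0. \<exists>j0\<in>J. \<forall>j\<in>J. le j0 j \<longrightarrow> dH A (F j) G < ereal \<epsilon>)"

definition Li :: "('b \<Rightarrow> complex) topology \<Rightarrow> 'j set \<Rightarrow> ('j \<Rightarrow> 'j \<Rightarrow> bool) \<Rightarrow> ('j \<Rightarrow> ('b \<Rightarrow> complex) set) \<Rightarrow> ('b \<Rightarrow> complex) set" where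
  "Li X J le F = {\<sigma>. \<exists>s j0. j0 \<in> J \<and> (\<forall>j\<in>J. le j0 j \<longrightarrow> s j \<in> F j) \<and> net_limit X J le s \<sigma>}"

text \<open>Subnet index sets are taken in the type 'j \<times> ('b \<Rightarrow> complex) set, which is
  large enough for every cluster point (index by pairs (j, neighbourhood)).\<close>
definition Ls :: "('b \<Rightarrow> complex) topology \<Rightarrow> 'j set \<Rightarrow> ('j \<Rightarrow> 'j \<Rightarrow> bool) \<Rightarrow> ('j \<Rightarrow> ('b \<Rightarrow> complex) set) \<Rightarrow> ('b \<Rightarrow> complex) set" where
  "Ls X J le F = {\<sigma>. \<exists>(I :: ('j \<times> ('b \<Rightarrow> complex) set) set) leI s \<tau>.
       directed I leI \<and> s ` I \<subseteq> J \<and>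
       (\<forall>j0\<in>J. \<exists>i0\<in>I. \<forall>i\<in>I. leI i0 i \<longrightarrow> le j0 (s i)) \<and>
       (\<forall>i\<in>I. \<tau> i \<in> F (s i)) \<and> net_limit X I leI \<tau> \<sigma>}"

end

theory Submission
  imports Defs
begin


lemma sf_props:
  assumes "scalar_field K"
  shows "0 \<in> K" "1 \<in> K" "-1 \<in> K" "\<And>r. complex_of_real r \<in> K"
    "\<And>a. a \<in> K \<Longrightarrow> cnj a \<in> K" "\<And>a b. a \<in> K \<Longrightarrow> b \<in> K \<Longrightarrow> a - b \<in> K"
    "\<And>a b. a \<in> K \<Longrightarrow> b \<in> K \<Longrightarrow> a * b \<in> K" "closed K"
  using assms unfolding scalar_field_def
  by (auto simp: Reals_cnj_iff closed_complex_Reals)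

lemma tvs_sf: "tvs K smul T \<Longrightarrow> scalar_field K"
  by (simp add: tvs_def)

lemma tvs_smul0:
  assumes "tvs K smul T" shows "smul 0 x = 0"
proof -
  have "0 \<in> K" using sf_props(1)[OF tvs_sf[OF assms]] .
  then have "smul (0 + 0) x = smul 0 x + smul 0 x" using assms unfolding tvs_def by blast
  then show ?thesis by simp
qed

lemma tvs_smul_zero:
  assumes "tvs K smul T" "a \<in> K" shows "smul a 0 = 0"
proof -
  have "smul a (0 + 0) = smul a 0 + smul a 0" using assms unfolding tvs_def by blast
  then show ?thesis by simp
qed

lemma tdual_lin:
  assumes "\<sigma> \<in> tdual K smul T"
  shows "\<sigma> 0 = 0" "\<And>x. \<sigma> (- x) = - \<sigma> x" "\<And>x y. \<sigma> (x + y) = \<sigma> x + \<sigma> y"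
    "\<And>a x. a \<in> K \<Longrightarrow> \<sigma> (smul a x) = a * \<sigma> x" "\<And>x. \<sigma> x \<in> K"
    "\<And>x y. \<sigma> (x - y) = \<sigma> x - \<sigma> y"
proof -
  have add: "\<And>x y. \<sigma> (x + y) = \<sigma> x + \<sigma> y" using assms by (simp add: tdual_def)
  show z: "\<sigma> 0 = 0" using add[of 0 0] by simp
  show "\<And>x. \<sigma> (- x) = - \<sigma> x" using add z by (metis add.right_inverse eq_neg_iff_add_eq_0)
  show "\<And>x y. \<sigma> (x + y) = \<sigma> x + \<sigma> y" by (rule add)
  show "\<And>x y. \<sigma> (x - y) = \<sigma> x - \<sigma> y" using add
    by (metis add_diff_cancel diff_add_cancel)
  show "\<And>a x. a \<in> K \<Longrightarrow> \<sigma> (smul a x) = a * \<sigma> x" "\<And>x. \<sigma> x \<in> K"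
    using assms by (auto simp: tdual_def)
qed

lemma tdual_sum:
  assumes "\<sigma> \<in> tdual K smul T" "finite S" "\<forall>A\<in>S. c A \<in> K"
  shows "\<sigma> (\<Sum>A\<in>S. smul (c A) A) = (\<Sum>A\<in>S. c A * \<sigma> A)"
  using assms(2,3)
proof (induction S rule: finite_induct)
  case empty then show ?case using tdual_lin(1)[OF assms(1)] by simp
next
  case (insert a S) then show ?case using tdual_lin(3,4)[OF assms(1)] by simp
qed

lemma tvs_cont_aff:
  assumes "tvs K smul T" "c \<in> K"
  shows "continuous_map T T (\<lambda>x. smul c (x + b))"
proof -
  have top: "topspace T = UNIV" using assms by (simp add: tvs_def)
  have add: "continuous_map (prod_topology T T) T (\<lambda>(x, y). x + y)"
   and sm: "continuous_map (prod_topology (subtopology euclidean K) T) T (\<lambda>(a, x). smul a x)"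
    using assms by (auto simp: tvs_def)
  have "continuous_map T (prod_topology T T) (\<lambda>x. (x, b))"
    by (intro continuous_map_pairedI continuous_map_id continuous_map_const[THEN iffD2]) (simp_all add: top)
  from continuous_map_compose[OF this add] have c1: "continuous_map T T (\<lambda>x. x + b)"
    by (simp add: o_def)
  have "continuous_map T (prod_topology (subtopology euclidean K) T) (\<lambda>y. (c, y))"
    by (intro continuous_map_pairedI continuous_map_id continuous_map_const[THEN iffD2]) (simp_all add: assms)
  from continuous_map_compose[OF this sm] have c2: "continuous_map T T (\<lambda>y. smul c y)"
    by (simp add: o_def)
  show ?thesis using continuous_map_compose[OF c1 c2] by (simp add: o_def)
qed

lemma equicont:
  assumes "tvs K smul T" "zero_nhd T U" "e > 0"
  shows "\<exists>N. openin T N \<and> A \<in> N \<and> (\<forall>x\<in>N. \<forall>\<sigma>\<in>polar K smul T U. cmod (\<sigma> x - \<sigma> A) \<le> e)"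
proof -
  obtain V where V: "openin T V" "0 \<in> V" "V \<subseteq> U" using assms(2) by (auto simp: zero_nhd_def)
  define c where "c = complex_of_real (1/e)"
  have cK: "c \<in> K" unfolding c_def by (rule sf_props(4)[OF tvs_sf[OF assms(1)]])
  define N where "N = {x \<in> topspace T. smul c (x + - A) \<in> V}"
  have "openin T N" unfolding N_def
    using openin_continuous_map_preimage[OF tvs_cont_aff[OF assms(1) cK, where b="-A"] V(1)] by simp
  moreover have "A \<in> N" using assms(1) V(2) tvs_smul_zero[OF assms(1) cK] by (simp add: N_def tvs_def)
  moreover have "cmod (\<sigma> x - \<sigma> A) \<le> e" if "x \<in> N" "\<sigma> \<in> polar K smul T U" for x \<sigma>
  proof -
    have s: "\<sigma> \<in> tdual K smul T" and b: "\<forall>B\<in>U. cmod (\<sigma> B) \<le> 1" using that(2) by (auto simp: polar_def)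
    have "cmod (\<sigma> (smul c (x + - A))) \<le> 1" using b that(1) V(3) by (auto simp: N_def)
    moreover have "\<sigma> (smul c (x + - A)) = c * (\<sigma> x - \<sigma> A)"
      using tdual_lin[OF s] cK by simp
    moreover have "cmod (c * (\<sigma> x - \<sigma> A)) = (1/e) * cmod (\<sigma> x - \<sigma> A)"
      unfolding c_def norm_mult using assms(3) by (simp add: norm_divide)
    ultimately have "(1/e) * cmod (\<sigma> x - \<sigma> A) \<le> 1" by simp
    then show ?thesis using assms(3) by (simp add: field_simps)
  qed
  ultimately show ?thesis by blast
qed

lemma polar_bound1:
  assumes "tvs K smul T" "zero_nhd T U"
  shows "\<exists>M>0. \<forall>\<sigma>\<in>polar K smul T U. cmod (\<sigma> A) \<le> M"
proof -
  obtain V where V: "openin T V" "0 \<in> V" "V \<subseteq> U" using assms(2) by (auto simp: zero_nhd_def)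
  have top: "topspace T = UNIV" using assms by (simp add: tvs_def)
  have sm: "continuous_map (prod_topology (subtopology euclidean K) T) T (\<lambda>(a, x). smul a x)"
    using assms by (auto simp: tvs_def)
  have "continuous_map (subtopology euclidean K) (prod_topology (subtopology euclidean K) T) (\<lambda>a. (a, A))"
    by (intro continuous_map_pairedI continuous_map_id continuous_map_const[THEN iffD2]) (simp_all add: top)
  from continuous_map_compose[OF this sm] have c: "continuous_map (subtopology euclidean K) T (\<lambda>a. smul a A)"
    by (simp add: o_def)
  have "openin (subtopology euclidean K) {a \<in> K. smul a A \<in> V}"
    using openin_continuous_map_preimage[OF c V(1)] by simp
  then obtain Op where Op: "open Op" "{a \<in> K. smul a A \<in> V} = Op \<inter> K"
    by (auto simp: openin_subtopology)
  have 0: "0 \<in> Op" using Op(2) V(2) tvs_smul0[OF assms(1)] sf_props(1)[OF tvs_sf[OF assms(1)]] by auto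
  obtain r where r: "r > 0" "ball 0 r \<subseteq> Op" using open_contains_ball_eq[OF Op(1)] 0 by blast
  define t where "t = r/2"
  have tK: "complex_of_real t \<in> K" using sf_props(4)[OF tvs_sf[OF assms(1)]] by simp
  have "complex_of_real t \<in> Op" using r by (auto simp: t_def)
  then have tV: "smul (complex_of_real t) A \<in> U" using Op(2) tK V(3) by blast
  show ?thesis
  proof (intro exI[of _ "1/t"] conjI ballI)
    show "1/t > 0" using r by (simp add: t_def)
    fix \<sigma> assume "\<sigma> \<in> polar K smul T U"
    then have s: "\<sigma> \<in> tdual K smul T" and b: "\<forall>B\<in>U. cmod (\<sigma> B) \<le> 1" by (auto simp: polar_def)
    have "cmod (\<sigma> (smul (complex_of_real t) A)) \<le> 1" using b tV by blast
    moreover have "cmod (\<sigma> (smul (complex_of_real t) A)) = t * cmod (\<sigma> A)"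
      unfolding tdual_lin(4)[OF s tK] norm_mult using r by (simp add: t_def)
    ultimately have "t * cmod (\<sigma> A) \<le> 1" by simp
    then show "cmod (\<sigma> A) \<le> 1/t" using r by (simp add: field_simps t_def)
  qed
qed

lemma polar_boundS:
  assumes "tvs K smul T" "zero_nhd T U" "finite S"
  shows "\<exists>M\<ge>0. \<forall>\<sigma>\<in>polar K smul T U. \<forall>A\<in>S. cmod (\<sigma> A) \<le> M"
  using assms(3)
proof (induction S rule: finite_induct)
  case empty then show ?case by auto
next
  case (insert a S)
  then obtain M where M: "M \<ge> 0" "\<forall>\<sigma>\<in>polar K smul T U. \<forall>A\<in>S. cmod (\<sigma> A) \<le> M" by blast
  obtain M' where M': "M' > 0" "\<forall>\<sigma>\<in>polar K smul T U. cmod (\<sigma> a) \<le> M'"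
    using polar_bound1[OF assms(1,2)] by blast
  show ?case using M M' by (intro exI[of _ "max M M'"]) force
qed



lemma topspace_weakstar: "topspace (weakstar K smul T) = tdual K smul T"
  by (simp add: weakstar_def)

lemma finite_pos_min:
  assumes "finite S" "\<forall>i\<in>S. \<exists>e::real>0. P i e" "\<And>i e e'. P i e \<Longrightarrow> 0 < e' \<Longrightarrow> e' \<le> e \<Longrightarrow> P i e'"
  shows "\<exists>e::real>0. \<forall>i\<in>S. P i e"
  using assms(1,2)
proof (induction S rule: finite_induct)
  case empty then show ?case by (auto intro: exI[of _ 1])
next
  case (insert a S)
  then obtain e where e: "e > 0" "\<forall>i\<in>S. P i e" by auto
  obtain e' where e': "e' > 0" "P a e'" using insert by auto
  show ?case using e e' assms(3)
    by (intro exI[of _ "min e e'"]) (auto simp: min_def)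
qed

lemma ws_basic:
  assumes "openin (weakstar K smul T) W" "\<sigma> \<in> W"
  shows "\<exists>S e. finite S \<and> e > 0 \<and>
    (\<forall>\<tau>\<in>tdual K smul T. (\<forall>A\<in>S. cmod (\<tau> A - \<sigma> A) < e) \<longrightarrow> \<tau> \<in> W)"
proof -
  obtain O' where O': "openin (product_topology (\<lambda>_. euclidean) UNIV) O'" "W = O' \<inter> tdual K smul T"
    using assms(1) by (auto simp: weakstar_def openin_subtopology)
  have "\<sigma> \<in> O'" using O' assms(2) by auto
  then obtain U where U: "finite {i. U i \<noteq> UNIV}" "\<forall>i. open (U i)" "\<sigma> \<in> Pi\<^sub>E UNIV U"
      "Pi\<^sub>E UNIV U \<subseteq> O'"
    using O'(1) unfolding openin_product_topology_alt by auto
  define S where "S = {i. U i \<noteq> UNIV}"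
  have "\<forall>i\<in>S. \<exists>e>0. ball (\<sigma> i) e \<subseteq> U i"
  proof
    fix i assume "i \<in> S"
    have "\<sigma> i \<in> U i" using U(3) by auto
    then show "\<exists>e>0. ball (\<sigma> i) e \<subseteq> U i" using U(2) open_contains_ball_eq by blast
  qed
  moreover have "finite S" using U(1) by (simp add: S_def)
  ultimately have "\<exists>e>0. \<forall>i\<in>S. ball (\<sigma> i) e \<subseteq> U i"
    by (intro finite_pos_min) (auto dest: subset_ball)
  then obtain e where e: "e > 0" "\<forall>i\<in>S. ball (\<sigma> i) e \<subseteq> U i" by blast
  show ?thesis
  proof (intro exI[of _ S] exI[of _ e] conjI ballI impI)
    show "finite S" using U(1) by (simp add: S_def)
    show "e > 0" by (rule e)
    fix \<tau> assume \<tau>: "\<tau> \<in> tdual K smul T" "\<forall>A\<in>S. cmod (\<tau> A - \<sigma> A) < e"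
    have "\<tau> i \<in> U i" for i
    proof (cases "i \<in> S")
      case True
      then have "\<tau> i \<in> ball (\<sigma> i) e" using \<tau>(2) by (simp add: dist_norm norm_minus_commute)
      then show ?thesis using e True by blast
    next
      case False then show ?thesis by (simp add: S_def)
    qed
    then have "\<tau> \<in> Pi\<^sub>E UNIV U" by auto
    then show "\<tau> \<in> W" using U(4) O'(2) \<tau>(1) by auto
  qed
qed

lemma ws_evopen:
  "openin (weakstar K smul T) {\<tau> \<in> tdual K smul T. cmod (\<tau> B - z) < e}"
proof -
  have c: "continuous_map (product_topology (\<lambda>_. euclidean) UNIV) euclidean (\<lambda>\<tau>::'a \<Rightarrow> complex. \<tau> B)"
    using continuous_map_product_projection[of B UNIV "\<lambda>_. euclidean"] by simp
  have o: "openin (euclidean :: complex topology) (ball z e)" by simp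
  have "openin (product_topology (\<lambda>_. euclidean) UNIV)
     {\<tau> \<in> topspace (product_topology (\<lambda>_::'a. euclidean) UNIV). (\<tau> B :: complex) \<in> ball z e}"
    by (rule openin_continuous_map_preimage[OF c o])
  moreover have "{\<tau> \<in> topspace (product_topology (\<lambda>_::'a. euclidean) UNIV). (\<tau> B :: complex) \<in> ball z e}
     = {\<tau>. cmod (\<tau> B - z) < e}"
    by (auto simp: dist_norm norm_minus_commute)
  ultimately have "openin (product_topology (\<lambda>_. euclidean) UNIV) {\<tau> :: 'a \<Rightarrow> complex. cmod (\<tau> B - z) < e}"
    by simp
  then show ?thesis unfolding weakstar_def openin_subtopology
    by (intro exI[of _ "{\<tau>. cmod (\<tau> B - z) < e}"] conjI) auto
qed

lemma dir_ub: "directed J le \<Longrightarrow> i \<in> J \<Longrightarrow> j \<in> J \<Longrightarrow> \<exists>k\<in>J. le i k \<and> le j k"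
  unfolding directed_def by blast

lemma dir_trans: "directed J le \<Longrightarrow> i \<in> J \<Longrightarrow> j \<in> J \<Longrightarrow> k \<in> J \<Longrightarrow> le i j \<Longrightarrow> le j k \<Longrightarrow> le i k"
  unfolding directed_def by blast

lemma dir_refl: "directed J le \<Longrightarrow> i \<in> J \<Longrightarrow> le i i"
  unfolding directed_def by blast

lemma dir_ne: "directed J le \<Longrightarrow> \<exists>j. j \<in> J"
  unfolding directed_def by blast

lemma ev_conj:
  assumes "directed J le" "\<exists>j0\<in>J. \<forall>j\<in>J. le j0 j \<longrightarrow> P j" "\<exists>j0\<in>J. \<forall>j\<in>J. le j0 j \<longrightarrow> Q j"
  shows "\<exists>j0\<in>J. \<forall>j\<in>J. le j0 j \<longrightarrow> P j \<and> Q j"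
proof -
  obtain a b where ab: "a \<in> J" "b \<in> J" "\<forall>j\<in>J. le a j \<longrightarrow> P j" "\<forall>j\<in>J. le b j \<longrightarrow> Q j"
    using assms by blast
  obtain k where k: "k \<in> J" "le a k" "le b k" using dir_ub[OF assms(1) ab(1,2)] by blast
  show ?thesis
  proof (intro bexI[of _ k] ballI impI conjI)
    fix j assume j: "j \<in> J" "le k j"
    have "le a j" by (rule dir_trans[OF assms(1) ab(1) k(1) j(1) k(2) j(2)])
    then show "P j" using ab(3) j(1) by blast
    have "le b j" by (rule dir_trans[OF assms(1) ab(2) k(1) j(1) k(3) j(2)])
    then show "Q j" using ab(4) j(1) by blast
  qed (rule k(1))
qed

lemma ev_finite:
  assumes "directed J le" "finite N" "\<forall>c\<in>N. \<exists>j0\<in>J. \<forall>j\<in>J. le j0 j \<longrightarrow> P c j"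
  shows "\<exists>j0\<in>J. \<forall>j\<in>J. le j0 j \<longrightarrow> (\<forall>c\<in>N. P c j)"
  using assms(2,3)
proof (induction N rule: finite_induct)
  case empty then show ?case using dir_ne[OF assms(1)] by auto
next
  case (insert a N)
  then have "\<exists>j0\<in>J. \<forall>j\<in>J. le j0 j \<longrightarrow> P a j \<and> (\<forall>c\<in>N. P c j)"
    by (intro ev_conj[OF assms(1)]) auto
  then show ?case by auto
qed

lemma dH_left:
  assumes "dH A F G < ereal e" "\<sigma> \<in> F"
  shows "\<exists>\<tau>\<in>G. cmod (\<sigma> A - \<tau> A) < e"
proof -
  have "(SUP \<sigma>\<in>F. INF \<tau>\<in>G. ereal (cmod (\<sigma> A - \<tau> A))) < ereal e"
    using assms(1) unfolding dH_def max_less_iff_conj by (rule conjunct1)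
  then have "(INF \<tau>\<in>G. ereal (cmod (\<sigma> A - \<tau> A))) < ereal e" using assms(2) by (rule SUP_lessD)
  then obtain \<tau> where "\<tau> \<in> G" "ereal (cmod (\<sigma> A - \<tau> A)) < ereal e" unfolding INF_less_iff by blast
  then show ?thesis by auto
qed

lemma dH_right:
  assumes "dH A F G < ereal e" "\<tau> \<in> G"
  shows "\<exists>\<sigma>\<in>F. cmod (\<sigma> A - \<tau> A) < e"
proof -
  have "(SUP \<tau>\<in>G. INF \<sigma>\<in>F. ereal (cmod (\<sigma> A - \<tau> A))) < ereal e"
    using assms(1) unfolding dH_def max_less_iff_conj by (rule conjunct2)
  then have "(INF \<sigma>\<in>F. ereal (cmod (\<sigma> A - \<tau> A))) < ereal e" using assms(2) by (rule SUP_lessD)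
  then obtain \<sigma> where "\<sigma> \<in> F" "ereal (cmod (\<sigma> A - \<tau> A)) < ereal e" unfolding INF_less_iff by blast
  then show ?thesis by auto
qed



lemma cmod_id:
  "(cmod (complex_of_real t * w - v))\<^sup>2 = t\<^sup>2 * (cmod w)\<^sup>2 - 2*t*Re (cnj v * w) + (cmod v)\<^sup>2"
  unfolding cmod_power2 by (simp add: power2_eq_square algebra_simps)

lemma sep:
  fixes C :: "('a \<Rightarrow> complex) set" and p :: "'a \<Rightarrow> complex"
  assumes "finite S" "C \<noteq> {}" "convex_fun_set C" "\<forall>\<tau>\<in>C. \<forall>A\<in>S. cmod (\<tau> A) \<le> M" "\<delta> > 0" "M \<ge> 0"
    "\<forall>\<tau>\<in>C. \<delta> \<le> (\<Sum>A\<in>S. (cmod (\<tau> A - p A))\<^sup>2)"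
  shows "\<exists>c0\<in>C. \<forall>\<tau>\<in>C. Re (\<Sum>A\<in>S. cnj (p A - c0 A) * \<tau> A)
            \<le> Re (\<Sum>A\<in>S. cnj (p A - c0 A) * p A) - \<delta>/2"
proof -
  define q where "q \<tau> = (\<Sum>A\<in>S. (cmod (\<tau> A - p A))\<^sup>2)" for \<tau> :: "'a \<Rightarrow> complex"
  define m where "m = Inf (q ` C)"
  have bdd: "bdd_below (q ` C)" unfolding q_def by (intro bdd_belowI[of _ 0]) (auto intro: sum_nonneg)
  have m\<delta>: "\<delta> \<le> m" unfolding m_def using assms(2,7) by (intro cInf_greatest) (auto simp: q_def)
  define K' where "K' = 4 * M\<^sup>2 * real (card S)"
  have K'0: "K' \<ge> 0" by (simp add: K'_def)
  define t where "t = min 1 (\<delta> / (2*K'+1))"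
  have t0: "t > 0" "t \<le> 1" using assms(5) K'0 by (auto simp: t_def)
  have tK: "t * K' \<le> \<delta>/2"
  proof -
    have "t * K' \<le> (\<delta> / (2*K'+1)) * K'" using K'0 by (intro mult_right_mono) (auto simp: t_def)
    also have "\<dots> \<le> \<delta>/2" using K'0 assms(5) by (simp add: field_simps)
    finally show ?thesis .
  qed
  define \<eta> where "\<eta> = t * \<delta> / 2"
  have \<eta>0: "\<eta> > 0" using t0 assms(5) by (simp add: \<eta>_def)
  have "Inf (q ` C) < m + \<eta>" using \<eta>0 by (simp add: m_def)
  then obtain c0 where c0: "c0 \<in> C" "q c0 < m + \<eta>"
    using cInf_less_iff[of "q ` C"] bdd assms(2) by auto
  show ?thesis
  proof (intro bexI[OF _ c0(1)] ballI)
    fix \<tau> assume \<tau>: "\<tau> \<in> C"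
    define v where "v A = p A - c0 A" for A
    define w where "w A = \<tau> A - c0 A" for A
    define z where "z x = complex_of_real t * \<tau> x + complex_of_real (1 - t) * c0 x" for x
    have cv: "\<forall>\<sigma>\<in>C. \<forall>\<tau>\<in>C. \<forall>t::real. 0 \<le> t \<and> t \<le> 1 \<longrightarrow>
       (\<lambda>x. complex_of_real t * \<sigma> x + complex_of_real (1 - t) * \<tau> x) \<in> C"
      using assms(3) unfolding convex_fun_set_def .
    have zC: "z \<in> C" unfolding z_def using cv \<tau> c0(1) t0 by simp
    have "m \<le> q z" unfolding m_def using zC bdd by (intro cInf_lower) auto
    have zA: "z A - p A = complex_of_real t * w A - v A" for A
      by (simp add: z_def w_def v_def algebra_simps)
    define L where "L = (\<Sum>A\<in>S. Re (cnj (v A) * w A))"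
    define Qw where "Qw = (\<Sum>A\<in>S. (cmod (w A))\<^sup>2)"
    define Qv where "Qv = (\<Sum>A\<in>S. (cmod (v A))\<^sup>2)"
    have qz: "q z = t\<^sup>2 * Qw - 2*t*L + Qv"
      unfolding q_def zA cmod_id Qw_def L_def Qv_def sum.distrib sum_subtractf sum_distrib_left mult.assoc
      by (rule refl)
    have qc0: "q c0 = Qv" unfolding q_def Qv_def v_def by (simp add: norm_minus_commute)
    have "Qw \<le> (\<Sum>A\<in>S. (2*M)\<^sup>2)" unfolding Qw_def
    proof (rule sum_mono)
      fix A assume A: "A \<in> S"
      have "cmod (w A) \<le> cmod (\<tau> A) + cmod (c0 A)" unfolding w_def by (rule norm_triangle_ineq4)
      also have "\<dots> \<le> 2*M"
      proof -
        have "cmod (\<tau> A) \<le> M" "cmod (c0 A) \<le> M" using assms(4) \<tau> c0(1) A by blast+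
        then show ?thesis by simp
      qed
      finally show "(cmod (w A))\<^sup>2 \<le> (2*M)\<^sup>2" by (intro power_mono) auto
    qed
    then have QwK: "Qw \<le> K'" by (simp add: K'_def power2_eq_square mult.commute)
    have "2*t*L \<le> t\<^sup>2 * Qw + \<eta>" using \<open>m \<le> q z\<close> qz qc0 c0(2) by linarith
    also have "\<dots> \<le> t * (t * K') + \<eta>" using QwK t0 by (simp add: power2_eq_square mult_left_mono)
    also have "\<dots> \<le> t * (\<delta>/2) + t * (\<delta>/2)"
    proof -
      have "t * (t * K') \<le> t * (\<delta>/2)" using tK t0 by (intro mult_left_mono) auto
      moreover have "t * (\<delta>/2) + t * (\<delta>/2) = t * (\<delta>/2) + t * \<delta> / 2" by simp
      ultimately show ?thesis unfolding \<eta>_def by linarith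
    qed
    finally have "2*t*L \<le> t * \<delta>" by (simp add: mult.commute)
    then have L: "L \<le> \<delta>/2" using t0 by (simp add: field_simps)
    have e1a: "(\<Sum>A\<in>S. cnj (p A - c0 A) * \<tau> A) = (\<Sum>A\<in>S. cnj (v A) * c0 A) + (\<Sum>A\<in>S. cnj (v A) * w A)"
      unfolding v_def w_def sum.distrib[symmetric] by (intro sum.cong) (auto simp: algebra_simps)
    have e1: "Re (\<Sum>A\<in>S. cnj (p A - c0 A) * \<tau> A) = Re (\<Sum>A\<in>S. cnj (v A) * c0 A) + L"
      unfolding e1a L_def plus_complex.sel Re_sum ..
    have e2: "Re (\<Sum>A\<in>S. cnj (p A - c0 A) * p A) = Re (\<Sum>A\<in>S. cnj (v A) * c0 A) + Qv"
    proof -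
      have "Re (\<Sum>A\<in>S. cnj (p A - c0 A) * p A) = (\<Sum>A\<in>S. Re (cnj (v A) * c0 A) + Re (cnj (v A) * v A))"
        unfolding Re_sum v_def by (intro sum.cong) (auto simp: algebra_simps)
      also have "\<dots> = Re (\<Sum>A\<in>S. cnj (v A) * c0 A) + Qv"
        unfolding sum.distrib Re_sum Qv_def cmod_power2 by (simp add: power2_eq_square sum.distrib)
      finally show ?thesis .
    qed
    have "\<delta> \<le> Qv" using qc0 assms(7) c0(1) unfolding q_def by metis
    then show "Re (\<Sum>A\<in>S. cnj (p A - c0 A) * \<tau> A) \<le> Re (\<Sum>A\<in>S. cnj (p A - c0 A) * p A) - \<delta>/2"
      using e1 e2 L by linarith
  qed
qed



lemma net1:
  assumes "scalar_field K" "\<rho> > 0"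
  shows "\<exists>Z. finite Z \<and> Z \<subseteq> K \<and> (\<forall>z\<in>K. cmod z \<le> R \<longrightarrow> (\<exists>z'\<in>Z. cmod (z - z') \<le> \<rho>))"
proof -
  define Kc where "Kc = cball (0::complex) R \<inter> K"
  have "compact Kc" unfolding Kc_def using sf_props(8)[OF assms(1)] by (intro compact_Int_closed) auto
  moreover have "Kc \<subseteq> (\<Union>c\<in>Kc. ball c \<rho>)" using assms(2) by auto
  ultimately obtain Z where Z: "Z \<subseteq> Kc" "finite Z" "Kc \<subseteq> (\<Union>c\<in>Z. ball c \<rho>)"
    using compactE_image[of Kc Kc "\<lambda>c. ball c \<rho>"] by auto
  show ?thesis
  proof (intro exI[of _ Z] conjI ballI impI)
    show "finite Z" by (rule Z(2))
    show "Z \<subseteq> K" using Z(1) by (auto simp: Kc_def)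
    fix z assume "z \<in> K" "cmod z \<le> R"
    then have "z \<in> Kc" by (auto simp: Kc_def)
    then obtain z' where "z' \<in> Z" "z \<in> ball z' \<rho>" using Z(3) by blast
    then show "\<exists>z'\<in>Z. cmod (z - z') \<le> \<rho>" by (intro bexI[of _ z']) (auto simp: dist_norm norm_minus_commute)
  qed
qed

lemma netS:
  assumes "scalar_field K" "finite S" "\<rho> > 0"
  shows "\<exists>N. finite N \<and> (\<forall>c'\<in>N. \<forall>A\<in>S. c' A \<in> K) \<and>
     (\<forall>c. (\<forall>A\<in>S. c A \<in> K \<and> cmod (c A) \<le> R) \<longrightarrow> (\<exists>c'\<in>N. (\<Sum>A\<in>S. cmod (c A - c' A)) \<le> \<rho>))"
  using assms(2,3)
proof (induction S arbitrary: \<rho> rule: finite_induct)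
  case empty
  then show ?case by (intro exI[of _ "{\<lambda>_. 0}"]) auto
next
  case (insert a S)
  have h: "\<rho>/2 > 0" using insert by simp
  obtain N' where N': "finite N'" "\<forall>c'\<in>N'. \<forall>A\<in>S. c' A \<in> K"
    "\<forall>c. (\<forall>A\<in>S. c A \<in> K \<and> cmod (c A) \<le> R) \<longrightarrow> (\<exists>c'\<in>N'. (\<Sum>A\<in>S. cmod (c A - c' A)) \<le> \<rho>/2)"
    using insert.IH[OF h] by blast
  obtain Z where Z: "finite Z" "Z \<subseteq> K" "\<forall>z\<in>K. cmod z \<le> R \<longrightarrow> (\<exists>z'\<in>Z. cmod (z - z') \<le> \<rho>/2)"
    using net1[OF assms(1) h] by blast
  define N where "N = (\<lambda>(c', z). c'(a := z)) ` (N' \<times> Z)"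
  show ?case
  proof (intro exI[of _ N] conjI allI impI ballI)
    show "finite N" unfolding N_def using N'(1) Z(1) by simp
    fix c' A assume "c' \<in> N" "A \<in> insert a S"
    then show "c' A \<in> K" using N'(2) Z(2) by (auto simp: N_def)
  next
    fix c assume c: "\<forall>A\<in>insert a S. c A \<in> K \<and> cmod (c A) \<le> R"
    obtain c' where c': "c' \<in> N'" "(\<Sum>A\<in>S. cmod (c A - c' A)) \<le> \<rho>/2" using N'(3) c by auto
    obtain z' where z': "z' \<in> Z" "cmod (c a - z') \<le> \<rho>/2" using Z(3) c by auto
    have "c'(a := z') \<in> N" unfolding N_def using c'(1) z'(1) by force
    moreover have "(\<Sum>A\<in>insert a S. cmod (c A - (c'(a := z')) A)) = cmod (c a - z') + (\<Sum>A\<in>S. cmod (c A - c' A))"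
    proof -
      have "(\<Sum>A\<in>S. cmod (c A - (c'(a := z')) A)) = (\<Sum>A\<in>S. cmod (c A - c' A))"
        using insert.hyps(2) by (intro sum.cong) auto
      then show ?thesis using insert.hyps by simp
    qed
    ultimately show "\<exists>c'\<in>N. (\<Sum>A\<in>insert a S. cmod (c A - c' A)) \<le> \<rho>" using c'(2) z'(2) by force
  qed
qed

lemma tri3: "cmod (a - d) \<le> cmod (a - b) + cmod (b - c) + cmod (c - d)"
proof -
  have "a - d = (a - b) + (b - c) + (c - d)" by simp
  then show ?thesis using norm_triangle_ineq[of "a-b+(b-c)" "c-d"] norm_triangle_ineq[of "a-b" "b-c"]
    by simp
qed

lemma sum_diff_bound:
  assumes "\<forall>A\<in>S. cmod (f A) \<le> M"
  shows "cmod ((\<Sum>A\<in>S. c A * f A) - (\<Sum>A\<in>S. c' A * f A)) \<le> (\<Sum>A\<in>S. cmod (c A - c' A)) * M"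
proof -
  have "cmod ((\<Sum>A\<in>S. c A * f A) - (\<Sum>A\<in>S. c' A * f A)) = cmod (\<Sum>A\<in>S. (c A - c' A) * f A)"
    by (simp add: sum_subtractf[symmetric] algebra_simps)
  also have "\<dots> \<le> (\<Sum>A\<in>S. cmod ((c A - c' A) * f A))" by (rule norm_sum)
  also have "\<dots> \<le> (\<Sum>A\<in>S. cmod (c A - c' A) * M)"
    using assms by (intro sum_mono) (auto simp: norm_mult intro: mult_left_mono)
  also have "\<dots> = (\<Sum>A\<in>S. cmod (c A - c' A)) * M" by (simp add: sum_distrib_right)
  finally show ?thesis .
qed

lemma far_sum:
  assumes "finite S" "A \<in> S" "e \<le> cmod (f A)" "0 \<le> e"
  shows "e\<^sup>2 \<le> (\<Sum>A\<in>S. (cmod (f A))\<^sup>2)"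
proof -
  have "e\<^sup>2 \<le> (cmod (f A))\<^sup>2" using assms(3,4) by (intro power_mono) auto
  also have "\<dots> \<le> (\<Sum>A\<in>S. (cmod (f A))\<^sup>2)" using assms(1,2) by (intro member_le_sum) auto
  finally show ?thesis .
qed

lemma CU_props:
  assumes "F \<in> CU K smul T U"
  shows "F \<noteq> {}" "F \<subseteq> polar K smul T U" "convex_fun_set F" "closedin (weakstar K smul T) F"
    "F \<subseteq> tdual K smul T"
  using assms by (auto simp: CU_def polar_def)

lemma Li_approx:
  assumes tvs: "tvs K smul T" and zn: "zero_nhd T U" and dir: "directed J le"
    and FJ: "\<forall>j\<in>J. F j \<in> CU K smul T U" and GC: "G \<in> CU K smul T U"
    and conv: "wsH_converges J le F G" and \<sigma>G: "\<sigma> \<in> G" and fS: "finite S" and e: "\<epsilon> > 0"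
  shows "\<exists>j0\<in>J. \<forall>j\<in>J. le j0 j \<longrightarrow> (\<exists>\<tau>\<in>F j. \<forall>A\<in>S. cmod (\<tau> A - \<sigma> A) < \<epsilon>)"
proof -
  have sf: "scalar_field K" by (rule tvs_sf[OF tvs])
  obtain M where M: "M \<ge> 0" "\<forall>\<sigma>\<in>polar K smul T U. \<forall>A\<in>S. cmod (\<sigma> A) \<le> M"
    using polar_boundS[OF tvs zn fS] by blast
  have \<sigma>P: "\<sigma> \<in> polar K smul T U" and \<sigma>D: "\<sigma> \<in> tdual K smul T" using CU_props[OF GC] \<sigma>G by auto
  define gap where "gap = \<epsilon>\<^sup>2 / 2"
  have gap0: "gap > 0" using e by (simp add: gap_def)
  define \<rho> where "\<rho> = gap / (4 * (M + 1))"
  have \<rho>0: "\<rho> > 0" using gap0 M(1) by (simp add: \<rho>_def)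
  have \<rho>M: "\<rho> * M \<le> gap / 4"
  proof -
    have "\<rho> * M = (gap/4) * (M / (M + 1))" by (simp add: \<rho>_def field_simps)
    also have "\<dots> \<le> (gap/4) * 1" using M(1) gap0 by (intro mult_left_mono) auto
    finally show ?thesis by simp
  qed
  obtain N where N: "finite N" "\<forall>c'\<in>N. \<forall>A\<in>S. c' A \<in> K"
     "\<forall>c. (\<forall>A\<in>S. c A \<in> K \<and> cmod (c A) \<le> 2*M) \<longrightarrow> (\<exists>c'\<in>N. (\<Sum>A\<in>S. cmod (c A - c' A)) \<le> \<rho>)"
    using netS[OF sf fS \<rho>0, of "2*M"] by blast
  define Bc where "Bc c = (\<Sum>A\<in>S. smul (c A) A)" for c :: "'a \<Rightarrow> complex"
  have "\<forall>c'\<in>N. \<exists>j0\<in>J. \<forall>j\<in>J. le j0 j \<longrightarrow> dH (Bc c') (F j) G < ereal (gap/4)"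
    using conv gap0 unfolding wsH_converges_def by auto
  from ev_finite[OF dir N(1), where P="\<lambda>c j. dH (Bc c) (F j) G < ereal (gap/4)", OF this]
  obtain j0 where j0: "j0 \<in> J" "\<forall>j\<in>J. le j0 j \<longrightarrow> (\<forall>c'\<in>N. dH (Bc c') (F j) G < ereal (gap/4))"
    by (elim bexE) (rule that)
  show ?thesis
  proof (intro bexI[OF _ j0(1)] ballI impI)
    fix j assume j: "j \<in> J" "le j0 j"
    show "\<exists>\<tau>\<in>F j. \<forall>A\<in>S. cmod (\<tau> A - \<sigma> A) < \<epsilon>"
    proof (rule ccontr)
      assume no: "\<not> ?thesis"
      have FjC: "F j \<in> CU K smul T U" using FJ j(1) by blast
      note Fp = CU_props[OF FjC]
      have far: "\<forall>\<tau>\<in>F j. \<epsilon>\<^sup>2 \<le> (\<Sum>A\<in>S. (cmod (\<tau> A - \<sigma> A))\<^sup>2)"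
      proof
        fix \<tau> assume "\<tau> \<in> F j"
        then obtain A where "A \<in> S" "\<epsilon> \<le> cmod (\<tau> A - \<sigma> A)" using no by force
        then show "\<epsilon>\<^sup>2 \<le> (\<Sum>A\<in>S. (cmod (\<tau> A - \<sigma> A))\<^sup>2)" using far_sum[OF fS] e by simp
      qed
      have bnd: "\<forall>\<tau>\<in>F j. \<forall>A\<in>S. cmod (\<tau> A) \<le> M" using M(2) Fp(2) by blast
      obtain c0 where c0: "c0 \<in> F j" "\<forall>\<tau>\<in>F j. Re (\<Sum>A\<in>S. cnj (\<sigma> A - c0 A) * \<tau> A)
            \<le> Re (\<Sum>A\<in>S. cnj (\<sigma> A - c0 A) * \<sigma> A) - \<epsilon>\<^sup>2/2"
        using sep[OF fS Fp(1) Fp(3) bnd _ M(1) far] e by auto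
      define c where "c A = cnj (\<sigma> A - c0 A)" for A
      have c0D: "c0 \<in> tdual K smul T" using Fp(5) c0(1) by blast
      have cK: "\<forall>A\<in>S. c A \<in> K \<and> cmod (c A) \<le> 2*M"
      proof
        fix A assume A: "A \<in> S"
        have "c A \<in> K" unfolding c_def using tdual_lin(5)[OF \<sigma>D] tdual_lin(5)[OF c0D] sf_props[OF sf] by blast
        moreover have "cmod (c A) \<le> cmod (\<sigma> A) + cmod (c0 A)" unfolding c_def complex_mod_cnj by (rule norm_triangle_ineq4)
        moreover have "cmod (\<sigma> A) \<le> M" "cmod (c0 A) \<le> M" using M(2) \<sigma>P bnd c0(1) A by auto
        ultimately show "c A \<in> K \<and> cmod (c A) \<le> 2*M" by simp
      qed
      then obtain c' where c': "c' \<in> N" "(\<Sum>A\<in>S. cmod (c A - c' A)) \<le> \<rho>" using N(3) by blast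
      have "dH (Bc c') (F j) G < ereal (gap/4)" using j0(2) j c'(1) by blast
      from dH_right[OF this \<sigma>G]
      obtain \<tau> where \<tau>: "\<tau> \<in> F j" "cmod (\<tau> (Bc c') - \<sigma> (Bc c')) < gap/4"
        by (elim bexE) (rule that)
      have c'K: "\<forall>A\<in>S. c' A \<in> K" using N(2) c'(1) by blast
      have \<tau>D: "\<tau> \<in> tdual K smul T" using Fp(5) \<tau>(1) by blast
      have ev1: "\<tau> (Bc c') = (\<Sum>A\<in>S. c' A * \<tau> A)" unfolding Bc_def by (rule tdual_sum[OF \<tau>D fS c'K])
      have ev2: "\<sigma> (Bc c') = (\<Sum>A\<in>S. c' A * \<sigma> A)" unfolding Bc_def by (rule tdual_sum[OF \<sigma>D fS c'K])
      have d1: "cmod ((\<Sum>A\<in>S. c A * \<tau> A) - (\<Sum>A\<in>S. c' A * \<tau> A)) \<le> \<rho> * M"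
      proof -
        have "cmod ((\<Sum>A\<in>S. c A * \<tau> A) - (\<Sum>A\<in>S. c' A * \<tau> A)) \<le> (\<Sum>A\<in>S. cmod (c A - c' A)) * M"
          using bnd \<tau>(1) by (intro sum_diff_bound) blast
        also have "\<dots> \<le> \<rho> * M" using c'(2) M(1) by (intro mult_right_mono) auto
        finally show ?thesis .
      qed
      have d2: "cmod ((\<Sum>A\<in>S. c A * \<sigma> A) - (\<Sum>A\<in>S. c' A * \<sigma> A)) \<le> \<rho> * M"
      proof -
        have "cmod ((\<Sum>A\<in>S. c A * \<sigma> A) - (\<Sum>A\<in>S. c' A * \<sigma> A)) \<le> (\<Sum>A\<in>S. cmod (c A - c' A)) * M"
          using M(2) \<sigma>P by (intro sum_diff_bound) blast
        also have "\<dots> \<le> \<rho> * M" using c'(2) M(1) by (intro mult_right_mono) auto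
        finally show ?thesis .
      qed
      define X\<tau> where "X\<tau> = (\<Sum>A\<in>S. c A * \<tau> A)"
      define X\<sigma> where "X\<sigma> = (\<Sum>A\<in>S. c A * \<sigma> A)"
      have "cmod (X\<tau> - X\<sigma>) \<le> cmod (X\<tau> - \<tau> (Bc c')) + cmod (\<tau> (Bc c') - \<sigma> (Bc c')) + cmod (\<sigma> (Bc c') - X\<sigma>)"
        by (rule tri3)
      also have "\<dots> < gap/4 + gap/4 + gap/4"
        using d1 d2 \<tau>(2) \<rho>M unfolding X\<tau>_def X\<sigma>_def ev1 ev2 by (simp add: norm_minus_commute)
      finally have lt: "cmod (X\<tau> - X\<sigma>) < 3 * gap / 4" by simp
      have "Re X\<tau> \<le> Re X\<sigma> - gap" using c0(2) \<tau>(1) unfolding X\<tau>_def X\<sigma>_def c_def gap_def by blast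
      then have "gap \<le> Re (X\<sigma> - X\<tau>)" by simp
      also have "\<dots> \<le> cmod (X\<tau> - X\<sigma>)" by (metis complex_Re_le_cmod norm_minus_commute)
      finally show False using lt gap0 by simp
    qed
  qed
qed



lemma Ls_sub:
  assumes tvs: "tvs K smul T" and zn: "zero_nhd T U" and dir: "directed J le"
    and FJ: "\<forall>j\<in>J. F j \<in> CU K smul T U" and GC: "G \<in> CU K smul T U"
    and conv: "wsH_converges J le F G" and \<sigma>L: "\<sigma> \<in> Ls (weakstar K smul T) J le F"
  shows "\<sigma> \<in> G"
proof (rule ccontr)
  assume nG: "\<sigma> \<notin> G"
  obtain I :: "('b \<times> ('a \<Rightarrow> complex) set) set" and leI s \<tau> where
    I: "directed I leI" "s ` I \<subseteq> J" "\<forall>j0\<in>J. \<exists>i0\<in>I. \<forall>i\<in>I. leI i0 i \<longrightarrow> le j0 (s i)"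
       "\<forall>i\<in>I. \<tau> i \<in> F (s i)" "net_limit (weakstar K smul T) I leI \<tau> \<sigma>"
    using \<sigma>L unfolding Ls_def by blast
  have sf: "scalar_field K" by (rule tvs_sf[OF tvs])
  have \<sigma>D: "\<sigma> \<in> tdual K smul T" using I(5) unfolding net_limit_def topspace_weakstar by blast
  note Gp = CU_props[OF GC]
  have "openin (weakstar K smul T) (topspace (weakstar K smul T) - G)"
    using Gp(4) unfolding closedin_def by blast
  then have op: "openin (weakstar K smul T) (tdual K smul T - G)" unfolding topspace_weakstar .
  have "\<sigma> \<in> tdual K smul T - G" using \<sigma>D nG by blast
  from ws_basic[OF op this] obtain S e where Se: "finite S" "e > 0"
    "\<forall>\<tau>\<in>tdual K smul T. (\<forall>A\<in>S. cmod (\<tau> A - \<sigma> A) < e) \<longrightarrow> \<tau> \<in> tdual K smul T - G"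
    by blast
  obtain M where M: "M \<ge> 0" "\<forall>\<sigma>\<in>polar K smul T U. \<forall>A\<in>S. cmod (\<sigma> A) \<le> M"
    using polar_boundS[OF tvs zn Se(1)] by blast
  have far: "\<forall>g\<in>G. e\<^sup>2 \<le> (\<Sum>A\<in>S. (cmod (g A - \<sigma> A))\<^sup>2)"
  proof
    fix g assume g: "g \<in> G"
    then have "g \<in> tdual K smul T" using Gp(5) by blast
    then have "\<not> (\<forall>A\<in>S. cmod (g A - \<sigma> A) < e)" using Se(3) g by blast
    then obtain A where "A \<in> S" "e \<le> cmod (g A - \<sigma> A)" by force
    then show "e\<^sup>2 \<le> (\<Sum>A\<in>S. (cmod (g A - \<sigma> A))\<^sup>2)" using far_sum[OF Se(1)] Se(2) by simp
  qed
  have bnd: "\<forall>g\<in>G. \<forall>A\<in>S. cmod (g A) \<le> M" using M(2) Gp(2) by blast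
  have e2: "e\<^sup>2 > 0" using Se(2) by simp
  obtain c0 where c0: "c0 \<in> G" "\<forall>g\<in>G. Re (\<Sum>A\<in>S. cnj (\<sigma> A - c0 A) * g A)
            \<le> Re (\<Sum>A\<in>S. cnj (\<sigma> A - c0 A) * \<sigma> A) - e\<^sup>2/2"
    using sep[OF Se(1) Gp(1) Gp(3) bnd e2 M(1) far] by blast
  define gap where "gap = e\<^sup>2/2"
  have gap0: "gap > 0" using e2 by (simp add: gap_def)
  define c where "c A = cnj (\<sigma> A - c0 A)" for A
  have c0D: "c0 \<in> tdual K smul T" using Gp(5) c0(1) by blast
  have cK: "\<forall>A\<in>S. c A \<in> K"
    unfolding c_def using tdual_lin(5)[OF \<sigma>D] tdual_lin(5)[OF c0D] sf_props[OF sf] by blast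
  define B where "B = (\<Sum>A\<in>S. smul (c A) A)"
  have evB: "g B = (\<Sum>A\<in>S. c A * g A)" if "g \<in> tdual K smul T" for g
    unfolding B_def by (rule tdual_sum[OF that Se(1) cK])
  have "\<exists>j0\<in>J. \<forall>j\<in>J. le j0 j \<longrightarrow> dH B (F j) G < ereal (gap/2)"
    using conv gap0 unfolding wsH_converges_def by auto
  then obtain j0 where j0: "j0 \<in> J" "\<forall>j\<in>J. le j0 j \<longrightarrow> dH B (F j) G < ereal (gap/2)" by blast
  obtain i0 where i0: "i0 \<in> I" "\<forall>i\<in>I. leI i0 i \<longrightarrow> le j0 (s i)" using I(3) j0(1) by blast
  define W where "W = {g \<in> tdual K smul T. cmod (g B - \<sigma> B) < gap/2}"
  have Wo: "openin (weakstar K smul T) W" unfolding W_def by (rule ws_evopen)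
  have "\<sigma> \<in> W" using \<sigma>D gap0 by (simp add: W_def)
  then obtain i1 where i1: "i1 \<in> I" "\<forall>i\<in>I. leI i1 i \<longrightarrow> \<tau> i \<in> W"
    using I(5) Wo unfolding net_limit_def by blast
  obtain i2 where i2: "i2 \<in> I" "leI i0 i2" "leI i1 i2" using dir_ub[OF I(1) i0(1) i1(1)] by blast
  have sJ: "s i2 \<in> J" using I(2) i2(1) by blast
  have "le j0 (s i2)" using i0(2) i2 by blast
  then have dh: "dH B (F (s i2)) G < ereal (gap/2)" using j0(2) sJ by blast
  have \<tau>F: "\<tau> i2 \<in> F (s i2)" using I(4) i2(1) by blast
  from dH_left[OF dh \<tau>F] obtain g where g: "g \<in> G" "cmod (\<tau> i2 B - g B) < gap/2"
    by (elim bexE) (rule that)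
  have "\<tau> i2 \<in> W" using i1(2) i2 by blast
  then have w: "cmod (\<tau> i2 B - \<sigma> B) < gap/2" by (simp add: W_def)
  have "cmod (g B - \<sigma> B) \<le> cmod (g B - \<tau> i2 B) + cmod (\<tau> i2 B - \<sigma> B)" using norm_triangle_ineq[of "g B - \<tau> i2 B" "\<tau> i2 B - \<sigma> B"] by simp
  then have lt: "cmod (g B - \<sigma> B) < gap" using g(2) w by (simp add: norm_minus_commute)
  have gD: "g \<in> tdual K smul T" using Gp(5) g(1) by blast
  have "Re (g B) \<le> Re (\<sigma> B) - gap" unfolding evB[OF gD] evB[OF \<sigma>D] c_def gap_def using c0(2) g(1) by blast
  then have "gap \<le> Re (\<sigma> B - g B)" by simp
  also have "\<dots> \<le> cmod (g B - \<sigma> B)" by (metis complex_Re_le_cmod norm_minus_commute)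
  finally show False using lt by simp
qed

lemma Li_sub_Ls:
  fixes F :: "'j \<Rightarrow> ('b \<Rightarrow> complex) set" and J :: "'j set"
  assumes dir: "directed J le" and \<sigma>L: "\<sigma> \<in> Li X J le F"
  shows "\<sigma> \<in> Ls X J le F"
proof -
  obtain s j0 where s: "j0 \<in> J" "\<forall>j\<in>J. le j0 j \<longrightarrow> s j \<in> F j" "net_limit X J le s \<sigma>"
    using \<sigma>L unfolding Li_def by blast
  define I :: "('j \<times> ('b \<Rightarrow> complex) set) set" where "I = {(j, {}) | j. j \<in> J \<and> le j0 j}"
  define leI where "leI x y = le (fst x) (fst y)" for x y :: "'j \<times> ('b \<Rightarrow> complex) set"
  have I_iff: "x \<in> I \<longleftrightarrow> fst x \<in> J \<and> le j0 (fst x) \<and> snd x = {}" for x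
    unfolding I_def by (cases x) auto
  have dI: "directed I leI"
    unfolding directed_def
  proof (intro conjI ballI impI)
    show "I \<noteq> {}" using s(1) dir_refl[OF dir s(1)] I_iff[of "(j0, {})"] by auto
    fix i assume i: "i \<in> I"
    then show "leI i i" using dir_refl[OF dir] by (simp add: leI_def I_iff)
  next
    fix i j k assume "i \<in> I" "j \<in> I" "k \<in> I" "leI i j \<and> leI j k"
    then show "leI i k" using dir_trans[OF dir] by (simp add: leI_def I_iff) blast
  next
    fix i j assume ij: "i \<in> I" "j \<in> I"
    then obtain k where k: "k \<in> J" "le (fst i) k" "le (fst j) k"
      using dir_ub[OF dir] by (simp add: I_iff) blast
    have "le j0 k" using dir_trans[OF dir s(1) _ k(1) _ k(2)] ij by (simp add: I_iff)
    then show "\<exists>k'\<in>I. leI i k' \<and> leI j k'"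
      using k by (intro bexI[of _ "(k, {})"]) (auto simp: leI_def I_iff)
  qed
  have cof: "\<forall>j1\<in>J. \<exists>i0\<in>I. \<forall>i\<in>I. leI i0 i \<longrightarrow> le j1 (fst i)"
  proof
    fix j1 assume j1: "j1 \<in> J"
    obtain k where k: "k \<in> J" "le j0 k" "le j1 k" using dir_ub[OF dir s(1) j1] by blast
    show "\<exists>i0\<in>I. \<forall>i\<in>I. leI i0 i \<longrightarrow> le j1 (fst i)"
    proof (intro bexI[of _ "(k, {})"] ballI impI)
      show "(k, {}) \<in> I" using k by (simp add: I_iff)
      fix i assume "i \<in> I" "leI (k, {}) i"
      then show "le j1 (fst i)" using dir_trans[OF dir j1 k(1) _ k(3)] by (simp add: I_iff leI_def)
    qed
  qed
  have mem: "\<forall>i\<in>I. s (fst i) \<in> F (fst i)" using s(2) by (simp add: I_iff)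
  have nl: "net_limit X I leI (\<lambda>i. s (fst i)) \<sigma>"
    unfolding net_limit_def
  proof (intro conjI allI impI)
    show "\<sigma> \<in> topspace X" using s(3) by (simp add: net_limit_def)
    fix W assume W: "openin X W \<and> \<sigma> \<in> W"
    then obtain j1 where j1: "j1 \<in> J" "\<forall>j\<in>J. le j1 j \<longrightarrow> s j \<in> W" using s(3) unfolding net_limit_def by blast
    obtain i0 where i0: "i0 \<in> I" "\<forall>i\<in>I. leI i0 i \<longrightarrow> le j1 (fst i)" using cof j1(1) by blast
    show "\<exists>i0\<in>I. \<forall>i\<in>I. leI i0 i \<longrightarrow> s (fst i) \<in> W"
    proof (intro bexI[OF _ i0(1)] ballI impI)
      fix i assume "i \<in> I" "leI i0 i"
      then show "s (fst i) \<in> W" using i0(2) j1(2) I_iff[of i] by blast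
    qed
  qed
  show ?thesis unfolding Ls_def
    using dI mem nl cof I_iff
    by (intro CollectI exI[of _ I] exI[of _ leI] exI[of _ fst] exI[of _ "\<lambda>i. s (fst i)"] conjI) auto
qed



lemma G_sub_Li:
  assumes tvs: "tvs K smul T" and sep_sp: "separable_space T" and zn: "zero_nhd T U" and dir: "directed J le"
    and FJ: "\<forall>j\<in>J. F j \<in> CU K smul T U" and GC: "G \<in> CU K smul T U"
    and conv: "wsH_converges J le F G" and \<sigma>G: "\<sigma> \<in> G"
  shows "\<sigma> \<in> Li (weakstar K smul T) J le F"
proof -
  have top: "topspace T = UNIV" using tvs by (simp add: tvs_def)
  obtain D where D: "countable D" "T closure_of D = UNIV"
    using sep_sp top unfolding separable_space_def by auto
  have Dne: "D \<noteq> {}" using D(2) by auto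
  define d where "d = from_nat_into D"
  have dD: "range d = D" unfolding d_def using Dne D(1) by simp
  note Gp = CU_props[OF GC]
  have \<sigma>P: "\<sigma> \<in> polar K smul T U" and \<sigma>D: "\<sigma> \<in> tdual K smul T" using Gp \<sigma>G by auto
  define Wn where "Wn n \<tau> \<longleftrightarrow> (\<forall>k\<in>{..n}. cmod (\<tau> (d k) - \<sigma> (d k)) < 1 / real (Suc n))" for n \<tau>
  have Wmono: "Wn m \<tau>" if "Wn n \<tau>" "m \<le> n" for m n \<tau>
  proof -
    have "1 / real (Suc n) \<le> 1 / real (Suc m)" using that(2) by (simp add: frac_le)
    note le = this
    show ?thesis unfolding Wn_def
    proof
      fix k assume "k \<in> {..m}"
      then have "k \<in> {..n}" using that(2) by auto
      then have "cmod (\<tau> (d k) - \<sigma> (d k)) < 1 / real (Suc n)" using that(1) unfolding Wn_def by blast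
      then show "cmod (\<tau> (d k) - \<sigma> (d k)) < 1 / real (Suc m)" using le by linarith
    qed
  qed
  have L6: "\<exists>n. \<forall>\<tau>\<in>polar K smul T U. Wn n \<tau> \<longrightarrow> (\<forall>A\<in>S. cmod (\<tau> A - \<sigma> A) < e)"
    if fS: "finite S" and e: "e > 0" for S e
  proof -
    have "\<forall>A\<in>S. \<exists>k. \<forall>\<tau>\<in>polar K smul T U. cmod (\<tau> (d k) - \<tau> A) \<le> e/3"
    proof
      fix A assume "A \<in> S"
      have e3: "e/3 > 0" using e by simp
      obtain N where N: "openin T N" "A \<in> N" "\<forall>x\<in>N. \<forall>\<sigma>\<in>polar K smul T U. cmod (\<sigma> x - \<sigma> A) \<le> e/3"
        using equicont[OF tvs zn e3] by blast
      have "A \<in> T closure_of D" using D(2) by simp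
      then obtain y where "y \<in> D" "y \<in> N" using N(1,2) unfolding in_closure_of by blast
      then obtain k where "d k \<in> N" using dD by auto
      then show "\<exists>k. \<forall>\<tau>\<in>polar K smul T U. cmod (\<tau> (d k) - \<tau> A) \<le> e/3" using N(3) by blast
    qed
    then obtain kf where kf: "\<forall>A\<in>S. \<forall>\<tau>\<in>polar K smul T U. cmod (\<tau> (d (kf A)) - \<tau> A) \<le> e/3"
      by metis
    define n where "n = max (Max (insert 0 (kf ` S))) (nat \<lceil>3/e\<rceil>)"
    have kn: "kf A \<le> n" if "A \<in> S" for A
    proof -
      have "kf A \<le> Max (insert 0 (kf ` S))" using fS that by (intro Max_ge) auto
      then show ?thesis unfolding n_def by simp
    qed
    have "3/e \<le> real (nat \<lceil>3/e\<rceil>)" by linarith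
    also have "\<dots> \<le> real n" unfolding n_def by simp
    also have "\<dots> < real (Suc n)" by simp
    finally have "3/e < real (Suc n)" .
    then have small: "1 / real (Suc n) < e/3" using e by (simp add: field_simps)
    show ?thesis
    proof (intro exI[of _ n] ballI impI)
      fix \<tau> A assume \<tau>: "\<tau> \<in> polar K smul T U" "Wn n \<tau>" and A: "A \<in> S"
      define k where "k = kf A"
      have "cmod (\<tau> A - \<sigma> A) \<le> cmod (\<tau> A - \<tau> (d k)) + cmod (\<tau> (d k) - \<sigma> (d k)) + cmod (\<sigma> (d k) - \<sigma> A)"
        by (rule tri3)
      also have "\<dots> < e/3 + e/3 + e/3"
      proof -
        have "cmod (\<tau> A - \<tau> (d k)) \<le> e/3" using kf A \<tau>(1) by (simp add: k_def norm_minus_commute)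
        moreover have "cmod (\<sigma> (d k) - \<sigma> A) \<le> e/3" using kf A \<sigma>P by (simp add: k_def)
        moreover have "cmod (\<tau> (d k) - \<sigma> (d k)) < 1 / real (Suc n)"
          using \<tau>(2) kn[OF A] unfolding Wn_def k_def by simp
        ultimately show ?thesis using small by linarith
      qed
      finally show "cmod (\<tau> A - \<sigma> A) < e" by simp
    qed
  qed
  define P where "P j n \<longleftrightarrow> (\<exists>\<tau>\<in>F j. Wn n \<tau>)" for j n
  have thr: "\<exists>j0\<in>J. \<forall>j\<in>J. le j0 j \<longrightarrow> P j n" for n
  proof -
    have "\<exists>j0\<in>J. \<forall>j\<in>J. le j0 j \<longrightarrow> (\<exists>\<tau>\<in>F j. \<forall>A\<in>d ` {..n}. cmod (\<tau> A - \<sigma> A) < 1 / real (Suc n))"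
      by (rule Li_approx[OF tvs zn dir FJ GC conv \<sigma>G]) auto
    then show ?thesis unfolding P_def Wn_def by simp
  qed
  have choice: "\<exists>\<tau>. \<tau> \<in> F j \<and> (\<forall>n. P j n \<longrightarrow> Wn n \<tau>)" if j: "j \<in> J" for j
  proof -
    have FjC: "F j \<in> CU K smul T U" using FJ j by blast
    note Fp = CU_props[OF FjC]
    show ?thesis
    proof (cases "\<forall>n. P j n")
      case True
      have "\<sigma> \<in> F j"
      proof (rule ccontr)
        assume nF: "\<sigma> \<notin> F j"
        have "openin (weakstar K smul T) (topspace (weakstar K smul T) - F j)"
          using Fp(4) unfolding closedin_def by blast
        then have op: "openin (weakstar K smul T) (tdual K smul T - F j)" unfolding topspace_weakstar .
        have "\<sigma> \<in> tdual K smul T - F j" using \<sigma>D nF by blast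
        from ws_basic[OF op this] obtain S e where Se: "finite S" "e > 0"
          "\<forall>\<tau>\<in>tdual K smul T. (\<forall>A\<in>S. cmod (\<tau> A - \<sigma> A) < e) \<longrightarrow> \<tau> \<in> tdual K smul T - F j"
          by blast
        obtain n where n: "\<forall>\<tau>\<in>polar K smul T U. Wn n \<tau> \<longrightarrow> (\<forall>A\<in>S. cmod (\<tau> A - \<sigma> A) < e)"
          using L6[OF Se(1,2)] by blast
        obtain \<tau> where \<tau>: "\<tau> \<in> F j" "Wn n \<tau>" using True unfolding P_def by blast
        have "\<tau> \<in> polar K smul T U" "\<tau> \<in> tdual K smul T" using Fp(2,5) \<tau>(1) by blast+
        then have "\<tau> \<in> tdual K smul T - F j" using n \<tau>(2) Se(3) by blast
        then show False using \<tau>(1) by blast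
      qed
      moreover have "Wn n \<sigma>" for n unfolding Wn_def by simp
      ultimately show ?thesis by blast
    next
      case False
      then obtain n0 where n0: "\<not> P j n0" by blast
      have bnd: "n < n0" if "P j n" for n
      proof (rule ccontr)
        assume "\<not> n < n0"
        then have "n0 \<le> n" by simp
        then have "P j n0" using that Wmono unfolding P_def by blast
        then show False using n0 by blast
      qed
      show ?thesis
      proof (cases "\<exists>n. P j n")
        case False
        obtain \<tau> where "\<tau> \<in> F j" using Fp(1) by blast
        then show ?thesis using False by (intro exI[of _ \<tau>] conjI allI impI) auto
      next
        case True
        define m where "m = Max {n. P j n}"
        have "{n. P j n} \<subseteq> {..<n0}" using bnd by blast
        then have fin: "finite {n. P j n}" using finite_subset by blast
        have "{n. P j n} \<noteq> {}" using True by blast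
        then have "m \<in> {n. P j n}" unfolding m_def using fin by (intro Max_in)
        then obtain \<tau> where \<tau>: "\<tau> \<in> F j" "Wn m \<tau>" unfolding P_def by blast
        have "Wn n \<tau>" if "P j n" for n
        proof -
          have "n \<in> {n. P j n}" using that by blast
          then have "n \<le> m" unfolding m_def using fin by (intro Max_ge)
          then show ?thesis using Wmono \<tau>(2) by blast
        qed
        then show ?thesis using \<tau>(1) by blast
      qed
    qed
  qed
  define s where "s j = (SOME \<tau>. \<tau> \<in> F j \<and> (\<forall>n. P j n \<longrightarrow> Wn n \<tau>))" for j
  have s: "s j \<in> F j \<and> (\<forall>n. P j n \<longrightarrow> Wn n (s j))" if "j \<in> J" for j
    unfolding s_def using choice[OF that] by (rule someI_ex)
  obtain j0 where j0: "j0 \<in> J" using dir_ne[OF dir] by blast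
  have nl: "net_limit (weakstar K smul T) J le s \<sigma>"
    unfolding net_limit_def
  proof (intro conjI allI impI)
    show "\<sigma> \<in> topspace (weakstar K smul T)" using \<sigma>D by (simp add: topspace_weakstar)
    fix W assume W: "openin (weakstar K smul T) W \<and> \<sigma> \<in> W"
    from ws_basic[OF W[THEN conjunct1] W[THEN conjunct2]] obtain S e where Se: "finite S" "e > 0"
      "\<forall>\<tau>\<in>tdual K smul T. (\<forall>A\<in>S. cmod (\<tau> A - \<sigma> A) < e) \<longrightarrow> \<tau> \<in> W"
      by blast
    obtain n where n: "\<forall>\<tau>\<in>polar K smul T U. Wn n \<tau> \<longrightarrow> (\<forall>A\<in>S. cmod (\<tau> A - \<sigma> A) < e)"
      using L6[OF Se(1,2)] by blast
    obtain j1 where j1: "j1 \<in> J" "\<forall>j\<in>J. le j1 j \<longrightarrow> P j n" using thr[of n] by blast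
    show "\<exists>j0\<in>J. \<forall>j\<in>J. le j0 j \<longrightarrow> s j \<in> W"
    proof (intro bexI[OF _ j1(1)] ballI impI)
      fix j assume j: "j \<in> J" "le j1 j"
      have sj: "s j \<in> F j" "Wn n (s j)" using s[OF j(1)] j1(2) j by blast+
      have FjC: "F j \<in> CU K smul T U" using FJ j(1) by blast
      have "s j \<in> polar K smul T U" "s j \<in> tdual K smul T" using CU_props(2,5)[OF FjC] sj(1) by blast+
      then show "s j \<in> W" using n sj(2) Se(3) by blast
    qed
  qed
  show ?thesis unfolding Li_def
    using j0 s nl by blast
qed


theorem corollary3p18:
  fixes K :: "complex set" and smul :: "complex \<Rightarrow> 'a::ab_group_add \<Rightarrow> 'a"
    and T :: "'a topology" and U :: "'a set"
    and J :: "'j set" and le :: "'j \<Rightarrow> 'j \<Rightarrow> bool"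
    and F :: "'j \<Rightarrow> ('a \<Rightarrow> complex) set"
  assumes "tvs K smul T"
    and "separable_space T"
    and "dual_separates_points K smul T"
    and "zero_nhd T U"
    and "directed J le"
    and "\<forall>j\<in>J. F j \<in> CU K smul T U"
    and "\<exists>G\<in>CU K smul T U. wsH_converges J le F G"
  shows "Li (weakstar K smul T) J le F = Ls (weakstar K smul T) J le F
    \<and> Li (weakstar K smul T) J le F \<in> CU K smul T U
    \<and> wsH_converges J le F (Li (weakstar K smul T) J le F)"
  proof -
  from assms(7) obtain G where GC: "G \<in> CU K smul T U" and conv: "wsH_converges J le F G" by blast
  have s1: "Ls (weakstar K smul T) J le F \<subseteq> G"
    using Ls_sub[OF assms(1) assms(4) assms(5) assms(6) GC conv] by blast
  have s2: "G \<subseteq> Li (weakstar K smul T) J le F"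
    using G_sub_Li[OF assms(1) assms(2) assms(4) assms(5) assms(6) GC conv] by blast
  have s3: "Li (weakstar K smul T) J le F \<subseteq> Ls (weakstar K smul T) J le F"
    using Li_sub_Ls[OF assms(5)] by blast
  have e1: "Li (weakstar K smul T) J le F = G" using s1 s2 s3 by blast
  have e2: "Ls (weakstar K smul T) J le F = G" using s1 s2 s3 by blast
  show ?thesis using GC conv unfolding e1 e2 by simp
qed

end
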